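(* Let $\Sigma$ be a finite alphabet, $z_1,\dots,z_n\in\Sigma$, and $L_z=\Sigma^*z_1\Sigma^*z_2\Sigma^*\cdots\Sigma^*z_n\Sigma^*$. There exists an end-decisive MM-QFA that accepts $L_z$ with bounded positive one-sided error.
   Context: A measure-many quantum finite automaton (MM-QFA) over $\Sigma$ is a tuple $(Q,\Sigma,\{U_\sigma\}_{\sigma\in\Sigma\cup\{\$\}},q_0,Q_{acc},Q_{rej})$ with $Q$ finite indexing an orthonormal basis of $\mathbb{C}^Q$, end-marker $\$\notin\Sigma$, unitary $U_\sigma$, initial state $q_0$, and $Q$ partitioned into $Q_{acc},Q_{rej},Q_{non}$ with orthogonal projections $P_{acc},P_{rej},P_{non}$ onto the corresponding spans. On input $x\in\Sigma^*$ it processes the symbols of $x\$$ maintaining $(\psi,p_{acc},p_{rej})$, initially $(|q_0\rangle,0,0)$; on reading $\sigma$: $\psi'=U_\sigma\psi$, $p_{acc}\mathrel{+}=\|P_{acc}\psi'\|^2$, $p_{rej}\mathrel{+}=\|P_{rej}\psi'\|^2$, $\psi\leftarrow P_{non}\psi'$; the acceptance probability $p_M(x)$ is the final $p_{acc}$. The MM-QFA is end-decisive if, for every input, $P_{acc}\psi'=0$ after reading every symbol other than the end-marker (i.e. it can be observed in an accepting state only when $\$$ is read). It accepts $L$ with bounded positive one-sided error if there is $c>0$ with $p_M(x)>c$ for all $x\in L$ and $p_M(x)=0$ for all $x\notin L$. *)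

theory Defs
  imports Complex_Main
begin

text \<open>The state set Q is {0..<qdim M}
  (indexing the standard orthonormal basis of C^Q); vectors are functions
  nat => complex (only indices < qdim M matter); the input symbols are
  Some s for s in the alphabet, and the end-marker is None.\<close>

record 'a mmqfa =
  qdim :: nat
  trans :: "'a option \<Rightarrow> nat \<Rightarrow> nat \<Rightarrow> complex"
  qinit :: nat
  qacc :: "nat set"
  qrej :: "nat set"

definition unitary_on :: "nat \<Rightarrow> (nat \<Rightarrow> nat \<Rightarrow> complex) \<Rightarrow> bool" where
  "unitary_on m U \<longleftrightarrow>
     (\<forall>i<m. \<forall>j<m. (\<Sum>k<m. cnj (U k i) * U k j) = (if i = j then 1 else 0))"

definition is_mmqfa :: "'a set \<Rightarrow> 'a mmqfa \<Rightarrow> bool" where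
  "is_mmqfa Sig M \<longleftrightarrow>
     qinit M < qdim M \<and> qacc M \<subseteq> {..<qdim M} \<and> qrej M \<subseteq> {..<qdim M} \<and>
     qacc M \<inter> qrej M = {} \<and>
     (\<forall>s \<in> Some ` Sig \<union> {None}. unitary_on (qdim M) (trans M s))"

definition apply_op :: "'a mmqfa \<Rightarrow> 'a option \<Rightarrow> (nat \<Rightarrow> complex) \<Rightarrow> (nat \<Rightarrow> complex)" where
  "apply_op M s psi = (\<lambda>i. if i < qdim M then (\<Sum>j<qdim M. trans M s i j * psi j) else 0)"

definition sqnorm_on :: "'a mmqfa \<Rightarrow> nat set \<Rightarrow> (nat \<Rightarrow> complex) \<Rightarrow> real" where
  "sqnorm_on M S psi = (\<Sum>i \<in> S \<inter> {..<qdim M}. (cmod (psi i))\<^sup>2)"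

definition proj_non :: "'a mmqfa \<Rightarrow> (nat \<Rightarrow> complex) \<Rightarrow> (nat \<Rightarrow> complex)" where
  "proj_non M psi = (\<lambda>i. if i < qdim M \<and> i \<notin> qacc M \<and> i \<notin> qrej M then psi i else 0)"

definition init_state :: "'a mmqfa \<Rightarrow> (nat \<Rightarrow> complex) \<times> real \<times> real" where
  "init_state M = ((\<lambda>i. if i = qinit M then 1 else 0), 0, 0)"

definition step :: "'a mmqfa \<Rightarrow> 'a option \<Rightarrow> (nat \<Rightarrow> complex) \<times> real \<times> real
                    \<Rightarrow> (nat \<Rightarrow> complex) \<times> real \<times> real" where
  "step M s st = (case st of (psi, pa, pr) \<Rightarrow>
      (let psi' = apply_op M s psi
       in (proj_non M psi', pa + sqnorm_on M (qacc M) psi', pr + sqnorm_on M (qrej M) psi')))"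

definition run :: "'a mmqfa \<Rightarrow> 'a option list \<Rightarrow> (nat \<Rightarrow> complex) \<times> real \<times> real" where
  "run M ws = fold (step M) ws (init_state M)"

definition acc_prob :: "'a mmqfa \<Rightarrow> 'a list \<Rightarrow> real" where
  "acc_prob M x = fst (snd (run M (map Some x @ [None])))"

definition end_decisive :: "'a set \<Rightarrow> 'a mmqfa \<Rightarrow> bool" where
  "end_decisive Sig M \<longleftrightarrow>
     (\<forall>x \<in> lists Sig. \<forall>k < length x.
        \<forall>i \<in> qacc M. apply_op M (Some (x ! k)) (fst (run M (map Some (take k x)))) i = 0)"

definition accepts_bounded_pos_one_sided :: "'a set \<Rightarrow> 'a mmqfa \<Rightarrow> 'a list set \<Rightarrow> bool" where
  "accepts_bounded_pos_one_sided Sig M L \<longleftrightarrow>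
     (\<exists>c::real. c > 0 \<and>
        (\<forall>x \<in> lists Sig. (x \<in> L \<longrightarrow> acc_prob M x > c) \<and> (x \<notin> L \<longrightarrow> acc_prob M x = 0)))"

fun subword_lang :: "'a set \<Rightarrow> 'a list \<Rightarrow> 'a list set" where
  "subword_lang Sig [] = lists Sig"
| "subword_lang Sig (z # zs) = {u @ [z] @ v | u v. u \<in> lists Sig \<and> v \<in> subword_lang Sig zs}"

end

theory Submission
  imports Defs
begin



definition ev :: "nat \<Rightarrow> nat \<Rightarrow> complex" where
  "ev j = (\<lambda>i. if i = j then 1 else 0)"

definition ip :: "nat \<Rightarrow> (nat \<Rightarrow> complex) \<Rightarrow> (nat \<Rightarrow> complex) \<Rightarrow> complex" where
  "ip m u v = (\<Sum>k<m. cnj (u k) * v k)"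

definition hrefl :: "nat \<Rightarrow> (nat \<Rightarrow> real) \<Rightarrow> (nat \<Rightarrow> complex) \<Rightarrow> (nat \<Rightarrow> complex)" where
  "hrefl m w \<phi> = (\<lambda>i. \<phi> i - 2 * (\<Sum>k<m. of_real (w k) * \<phi> k) * of_real (w i))"

definition rep :: "nat \<Rightarrow> ((nat \<Rightarrow> complex) \<Rightarrow> (nat \<Rightarrow> complex)) \<Rightarrow> bool" where
  "rep m Op \<longleftrightarrow> (\<forall>\<psi> i. i < m \<longrightarrow> Op \<psi> i = (\<Sum>j<m. Op (ev j) i * \<psi> j))"

lemma hrefl_ip:
  assumes w: "(\<Sum>k<m. (w k)^2) = 1"
  shows "ip m (hrefl m w u) (hrefl m w v) = ip m u v"
proof -
  define a where "a = (\<Sum>k<m. of_real (w k) * u k)"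
  define b where "b = (\<Sum>k<m. of_real (w k) * v k)"
  have ca: "(\<Sum>k<m. cnj (u k) * of_real (w k)) = cnj a"
    unfolding a_def by (simp add: mult.commute)
  have w2: "(\<Sum>k<m. of_real (w k) * of_real (w k) :: complex) = 1"
  proof -
    have "(\<Sum>k<m. of_real (w k) * of_real (w k) :: complex) = of_real (\<Sum>k<m. (w k)^2)"
      by (simp add: power2_eq_square)
    then show ?thesis using w by simp
  qed
  have "ip m (hrefl m w u) (hrefl m w v) =
     (\<Sum>k<m. (cnj (u k) - 2 * cnj a * of_real (w k)) * (v k - 2 * b * of_real (w k)))"
    unfolding ip_def hrefl_def a_def b_def by simp
  also have "\<dots> = (\<Sum>k<m. cnj (u k) * v k) - 2 * b * (\<Sum>k<m. cnj (u k) * of_real (w k))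
       - 2 * cnj a * (\<Sum>k<m. of_real (w k) * v k)
       + 4 * cnj a * b * (\<Sum>k<m. of_real (w k) * of_real (w k))"
    by (simp add: algebra_simps sum.distrib sum_subtractf sum_distrib_left)
  also have "\<dots> = ip m u v"
    unfolding ip_def using ca w2 b_def by simp
  finally show ?thesis .
qed

lemma delta_sum1: "i < (m::nat) \<Longrightarrow> (\<Sum>j<m. (if i = j then 1 else 0) * f j) = (f i :: complex)"
proof -
  assume "i < m"
  have "(\<Sum>j<m. (if i = j then 1 else 0) * f j) = (\<Sum>j<m. if i = j then f j else 0)"
    by (rule sum.cong) auto
  also have "\<dots> = f i" using \<open>i < m\<close> by (subst sum.delta') auto
  finally show ?thesis .
qed

lemma delta_sum2: "i < (m::nat) \<Longrightarrow> (\<Sum>j<m. f j * (if j = i then 1 else 0)) = (f i :: complex)"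
proof -
  assume "i < m"
  have "(\<Sum>j<m. f j * (if j = i then 1 else 0)) = (\<Sum>j<m. if i = j then f j else 0)"
    by (rule sum.cong) auto
  also have "\<dots> = f i" using \<open>i < m\<close> by (subst sum.delta') auto
  finally show ?thesis .
qed

lemma hrefl_ev: "j < m \<Longrightarrow> hrefl m w (ev j) i = ev j i - 2 * of_real (w j) * of_real (w i)"
  unfolding hrefl_def ev_def using delta_sum2[of j m "\<lambda>k. of_real (w k)"] by simp

lemma hrefl_rep: "rep m (hrefl m w)"
  unfolding rep_def
proof (intro allI impI)
  fix \<psi> i assume i: "i < m"
  have "(\<Sum>j<m. hrefl m w (ev j) i * \<psi> j) = (\<Sum>j<m. ev j i * \<psi> j - 2 * of_real (w i) * (of_real (w j) * \<psi> j))"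
    by (rule sum.cong) (auto simp: hrefl_ev algebra_simps)
  also have "\<dots> = (\<Sum>j<m. ev j i * \<psi> j) - 2 * of_real (w i) * (\<Sum>j<m. of_real (w j) * \<psi> j)"
    by (simp add: sum_subtractf sum_distrib_left)
  also have "(\<Sum>j<m. ev j i * \<psi> j) = \<psi> i"
    using i delta_sum1[of i m \<psi>] unfolding ev_def by (simp add: eq_commute)
  finally show "hrefl m w \<psi> i = (\<Sum>j<m. hrefl m w (ev j) i * \<psi> j)"
    unfolding hrefl_def by (simp add: algebra_simps)
qed

lemma rep_id: "rep m id"
  unfolding rep_def ev_def
proof (intro allI impI)
  fix \<psi> :: "nat \<Rightarrow> complex" and i assume "i < m"
  have "(\<Sum>j<m. id (\<lambda>ia. if ia = j then 1 else 0) i * \<psi> j) = (\<Sum>j<m. (if i = j then 1 else 0) * \<psi> j)"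
    by simp
  then show "id \<psi> i = (\<Sum>j<m. id (\<lambda>ia. if ia = j then 1 else 0) i * \<psi> j)"
    using delta_sum1[OF \<open>i < m\<close>, of \<psi>] by simp
qed

lemma rep_comp:
  assumes A: "rep m A" and B: "rep m B"
  shows "rep m (A \<circ> B)"
  unfolding rep_def
proof (intro allI impI)
  fix \<psi> i assume i: "i < m"
  have "(A \<circ> B) \<psi> i = (\<Sum>j<m. A (ev j) i * B \<psi> j)"
    using A i unfolding rep_def by simp
  also have "\<dots> = (\<Sum>j<m. A (ev j) i * (\<Sum>l<m. B (ev l) j * \<psi> l))"
    using B unfolding rep_def by simp
  also have "\<dots> = (\<Sum>l<m. (\<Sum>j<m. A (ev j) i * B (ev l) j) * \<psi> l)"
    apply (simp add: sum_distrib_left sum_distrib_right mult.assoc)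
    apply (rule sum.swap)
    done
  also have "\<dots> = (\<Sum>l<m. (A \<circ> B) (ev l) i * \<psi> l)"
    using A i unfolding rep_def by simp
  finally show "(A \<circ> B) \<psi> i = (\<Sum>j<m. (A \<circ> B) (ev j) i * \<psi> j)" .
qed

lemma unitary_from_ip:
  assumes "\<And>u v. ip m (Op u) (Op v) = ip m u v"
  shows "unitary_on m (\<lambda>i j. Op (ev j) i)"
  unfolding unitary_on_def
proof (intro allI impI)
  fix i j assume "i < m" "j < m"
  have "(\<Sum>k<m. cnj (Op (ev i) k) * Op (ev j) k) = ip m (ev i) (ev j)"
    using assms[of "ev i" "ev j"] unfolding ip_def by simp
  also have "\<dots> = (if i = j then 1 else 0)"
    using \<open>i < m\<close> \<open>j < m\<close> delta_sum2[of j m "\<lambda>k. cnj (ev i k)"] unfolding ip_def by (simp add: ev_def)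
  finally show "(\<Sum>k<m. cnj (Op (ev i) k) * Op (ev j) k) = (if i = j then 1 else 0)" .
qed




lemma rep_id': "rep m (\<lambda>x. x)"
  using rep_id by (simp add: id_def)

definition qd :: "nat \<Rightarrow> nat" where "qd n = 2*n+2"


definition wv :: "nat \<Rightarrow> nat \<Rightarrow> nat \<Rightarrow> real" where
  "wv n k t = (if t = k then 1/2 else if t = Suc k then -1/2 else if t = n + 1 + k then -(1/sqrt 2) else 0)"

definition wend :: "nat \<Rightarrow> nat \<Rightarrow> real" where
  "wend n t = (if t = n then 1/sqrt 2 else if t = 2*n+1 then -(1/sqrt 2) else 0)"

fun OpSeq :: "'a list \<Rightarrow> 'a \<Rightarrow> nat \<Rightarrow> (nat \<Rightarrow> complex) \<Rightarrow> (nat \<Rightarrow> complex)" where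
  "OpSeq z a 0 = id"
| "OpSeq z a (Suc k) = OpSeq z a k \<circ> (if z!k = a then hrefl (qd (length z)) (wv (length z) k) else id)"

definition Opz :: "'a list \<Rightarrow> 'a option \<Rightarrow> (nat \<Rightarrow> complex) \<Rightarrow> (nat \<Rightarrow> complex)" where
  "Opz z s = (case s of Some a \<Rightarrow> OpSeq z a (length z) | None \<Rightarrow> hrefl (qd (length z)) (wend (length z)))"

definition Mz :: "'a list \<Rightarrow> 'a mmqfa" where
  "Mz z = \<lparr>qdim = qd (length z), trans = (\<lambda>s i j. Opz z s (ev j) i), qinit = 0,
           qacc = {2*length z+1}, qrej = {length z<..2*length z}\<rparr>"

lemma sum_support:
  assumes "T \<subseteq> {..<(m::nat)}" "\<forall>t\<in>{..<m} - T. f t = 0"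
  shows "(\<Sum>t<m. f t) = sum f T"
  using sum.mono_neutral_right[of "{..<m}" T f] assms by auto

lemma sqrt2_sq: "(1 / sqrt 2)^2 = (1/2::real)"
  by (simp add: power_divide)

lemma wv_norm:
  assumes "k < n"
  shows "(\<Sum>t<2*n+2. (wv n k t)^2) = 1"
proof -
  have "(\<Sum>t<2*n+2. (wv n k t)^2) = (\<Sum>t\<in>{k, Suc k, n+1+k}. (wv n k t)^2)"
    by (rule sum_support) (use assms in \<open>auto simp: wv_def\<close>)
  also have "\<dots> = (1/2)^2 + (-1/2)^2 + (-(1/sqrt 2))^2"
    using assms by (simp add: wv_def)
  also have "\<dots> = 1" by (simp add: power_divide)
  finally show ?thesis .
qed

lemma wend_norm: "(\<Sum>t<2*n+2. (wend n t)^2) = 1"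
proof -
  have "(\<Sum>t<2*n+2. (wend n t)^2) = (\<Sum>t\<in>{n, 2*n+1}. (wend n t)^2)"
    by (rule sum_support) (auto simp: wend_def)
  also have "\<dots> = (1/sqrt 2)^2 + (-(1/sqrt 2))^2"
    by (simp add: wend_def)
  also have "\<dots> = 1" by (simp add: power_divide)
  finally show ?thesis .
qed

lemma OpSeq_ip: "k \<le> length z \<Longrightarrow> ip (qd (length z)) (OpSeq z a k u) (OpSeq z a k v) = ip (qd (length z)) u v"
proof (induction k arbitrary: u v)
  case 0 then show ?case by simp
next
  case (Suc k)
  then have "k < length z" by simp
  show ?case
    using Suc.IH[of "(if z!k = a then hrefl (qd (length z)) (wv (length z) k) else id) u"
                    "(if z!k = a then hrefl (qd (length z)) (wv (length z) k) else id) v"] Suc.prems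
      hrefl_ip[OF wv_norm[OF \<open>k < length z\<close>, folded qd_def]]
    by simp
qed

lemma OpSeq_rep: "rep (qd (length z)) (OpSeq z a k)"
proof (induction k)
  case 0 then show ?case by (simp add: rep_id')
next
  case (Suc k)
  have "rep (qd (length z)) (if z!k = a then hrefl (qd (length z)) (wv (length z) k) else id)"
    by (simp add: rep_id hrefl_rep)
  then have "rep (qd (length z)) (OpSeq z a k \<circ> (if z!k = a then hrefl (qd (length z)) (wv (length z) k) else id))"
    using Suc by (rule rep_comp[rotated])
  then show ?case by (simp only: OpSeq.simps)
qed

lemma Opz_ip: "ip (qd (length z)) (Opz z s u) (Opz z s v) = ip (qd (length z)) u v"
proof (cases s)
  case None
  then show ?thesis using hrefl_ip[OF wend_norm[of "length z", folded qd_def]] by (simp add: Opz_def)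
next
  case (Some a)
  then show ?thesis using OpSeq_ip[of "length z" z a u v] by (simp add: Opz_def)
qed

lemma Opz_rep: "rep (qd (length z)) (Opz z s)"
  by (cases s) (auto simp: Opz_def OpSeq_rep hrefl_rep)

lemma Mz_is: "is_mmqfa Sig (Mz z)"
proof -
  have "\<And>s. unitary_on (qd (length z)) (\<lambda>i j. Opz z s (ev j) i)"
    by (rule unitary_from_ip) (rule Opz_ip)
  then show ?thesis unfolding is_mmqfa_def Mz_def by (auto simp: qd_def)
qed

lemma apply_op_Mz: "apply_op (Mz z) s \<psi> = (\<lambda>i. if i < qd (length z) then Opz z s \<psi> i else 0)"
  using Opz_rep[of z s] unfolding apply_op_def Mz_def rep_def by (auto simp del: qd_def)




definition avg :: "nat \<Rightarrow> (nat \<Rightarrow> 'b::field) \<Rightarrow> nat \<Rightarrow> 'b" where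
  "avg k c = c(k := (c k + c (Suc k)) / 2, Suc k := (c k + c (Suc k)) / 2)"

fun AvgSeq :: "'a list \<Rightarrow> 'a \<Rightarrow> nat \<Rightarrow> (nat \<Rightarrow> 'b::field) \<Rightarrow> nat \<Rightarrow> 'b" where
  "AvgSeq z a 0 c = c"
| "AvgSeq z a (Suc k) c = AvgSeq z a k (if z!k = a then avg k c else c)"

lemma hrefl_zero: "w t = 0 \<Longrightarrow> hrefl m w \<phi> t = \<phi> t"
  by (simp add: hrefl_def)

lemma wv_inner:
  fixes \<phi> :: "nat \<Rightarrow> complex"
  assumes "k < n"
  shows "(\<Sum>t<qd n. of_real (wv n k t) * \<phi> t) = \<phi> k / 2 - \<phi> (Suc k) / 2 - \<phi> (n+1+k) / of_real (sqrt 2)"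
proof -
  have "(\<Sum>t<qd n. of_real (wv n k t) * \<phi> t) = (\<Sum>t\<in>{k, Suc k, n+1+k}. of_real (wv n k t) * \<phi> t)"
    by (rule sum_support) (use assms in \<open>auto simp: wv_def qd_def\<close>)
  also have "\<dots> = \<phi> k / 2 - \<phi> (Suc k) / 2 - \<phi> (n+1+k) / of_real (sqrt 2)"
    using assms by (simp add: wv_def of_real_divide field_simps)
  finally show ?thesis .
qed

lemma hrefl_wv_nh:
  fixes \<phi> :: "nat \<Rightarrow> complex"
  assumes "k < n" "\<phi> (n+1+k) = 0" "t \<le> n"
  shows "hrefl (qd n) (wv n k) \<phi> t = avg k \<phi> t"
proof -
  have I: "(\<Sum>t<qd n. of_real (wv n k t) * \<phi> t) = \<phi> k / 2 - \<phi> (Suc k) / 2"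
    using wv_inner[OF assms(1)] assms(2) by simp
  show ?thesis
    unfolding hrefl_def I using assms
    by (auto simp: avg_def wv_def field_simps)
qed

lemma AvgSeq_cong:
  "k \<le> length z \<Longrightarrow> (\<forall>t\<le>length z. f t = g t) \<Longrightarrow> t \<le> length z \<Longrightarrow> AvgSeq z a k f t = AvgSeq z a k g t"
proof (induction k arbitrary: f g)
  case 0 then show ?case by simp
next
  case (Suc k)
  have "\<forall>t\<le>length z. (if z!k = a then avg k f else f) t = (if z!k = a then avg k g else g) t"
    using Suc.prems by (auto simp: avg_def)
  then show ?case using Suc by simp
qed

lemma OpSeq_nh:
  "k \<le> length z \<Longrightarrow> (\<forall>j<k. \<phi> (length z+1+j) = 0) \<Longrightarrow> t \<le> length z \<Longrightarrow>
    OpSeq z a k \<phi> t = AvgSeq z a k \<phi> t"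
proof (induction k arbitrary: \<phi> t)
  case 0 then show ?case by simp
next
  case (Suc k)
  let ?H = "(if z!k = a then hrefl (qd (length z)) (wv (length z) k) else id)"
  let ?H' = "(if z!k = a then avg k \<phi> else \<phi>)"
  have k: "k < length z" using Suc by simp
  have z: "\<forall>j<k. ?H \<phi> (length z+1+j) = 0"
    using Suc.prems by (auto simp: hrefl_zero wv_def)
  have "OpSeq z a (Suc k) \<phi> t = OpSeq z a k (?H \<phi>) t" by simp
  also have "\<dots> = AvgSeq z a k (?H \<phi>) t"
    using Suc.IH[OF _ z] Suc.prems by simp
  also have "\<dots> = AvgSeq z a k ?H' t"
  proof (rule AvgSeq_cong)
    show "\<forall>t\<le>length z. ?H \<phi> t = ?H' t"
      using hrefl_wv_nh[OF k, of \<phi>] Suc.prems by auto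
  qed (use Suc.prems in auto)
  also have "\<dots> = AvgSeq z a (Suc k) \<phi> t" by simp
  finally show ?case .
qed

lemma OpSeq_acc: "k \<le> length z \<Longrightarrow> OpSeq z a k \<phi> (2*length z+1) = \<phi> (2*length z+1)"
proof (induction k arbitrary: \<phi>)
  case 0 then show ?case by simp
next
  case (Suc k)
  then show ?case by (auto simp: hrefl_zero wv_def)
qed

lemma AvgSeq_high: "k < t \<Longrightarrow> AvgSeq z a k c t = c t"
proof (induction k arbitrary: c)
  case 0 then show ?case by simp
next
  case (Suc k) then show ?case by (auto simp: avg_def)
qed

lemma AvgSeq_of_real:
  "AvgSeq z a k (\<lambda>t. of_real (c t) :: complex) = (\<lambda>t. of_real (AvgSeq z a k c t))"
proof (induction k arbitrary: c)
  case 0 then show ?case by simp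
next
  case (Suc k)
  have "(if z!k = a then avg k (\<lambda>t. of_real (c t) :: complex) else (\<lambda>t. of_real (c t)))
      = (\<lambda>t. of_real ((if z!k = a then avg k c else c) t))"
    by (auto simp: avg_def fun_eq_iff)
  then show ?case using Suc by simp
qed




definition pstep :: "'a list \<Rightarrow> 'a \<Rightarrow> nat \<Rightarrow> nat" where
  "pstep z a p = (if p < length z \<and> z!p = a then Suc p else p)"

definition decr :: "(nat \<Rightarrow> real) \<Rightarrow> bool" where
  "decr c \<longleftrightarrow> (\<forall>t. 0 \<le> c t) \<and> (\<forall>s t. s \<le> t \<longrightarrow> c t \<le> c s)"

definition Inv :: "nat \<Rightarrow> nat \<Rightarrow> (nat \<Rightarrow> real) \<Rightarrow> bool" where
  "Inv n p c \<longleftrightarrow> p \<le> n \<and> decr c \<and> (\<forall>t>p. c t = 0) \<and> (1/2)^p \<le> c p"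

lemma avg_decr:
  assumes "decr c" shows "decr (avg k c)"
proof -
  have nn: "\<forall>t. 0 \<le> c t" and d: "\<And>s t. s \<le> t \<Longrightarrow> c t \<le> c s" using assms by (auto simp: decr_def)
  have k1: "c (Suc k) \<le> c k" using d by simp
  have "0 \<le> avg k c t" for t using nn by (auto simp: avg_def)
  moreover have "avg k c t \<le> avg k c s" if "s \<le> t" for s t
  proof -
    consider "t = k" | "t = Suc k" | "t \<noteq> k \<and> t \<noteq> Suc k" by blast
    then show ?thesis
    proof cases
      case 1
      then have "s = k \<or> s < k" using that by auto
      then show ?thesis using d[of s k] k1 1 by (auto simp: avg_def)
    next
      case 2
      then have "s = k \<or> s = Suc k \<or> s < k" using that by auto
      then show ?thesis using d[of s k] k1 2 by (auto simp: avg_def)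
    next
      case 3
      then have t: "t > Suc k \<or> t < k" by auto
      consider "s = k" | "s = Suc k" | "s \<noteq> k \<and> s \<noteq> Suc k" by blast
      then show ?thesis
      proof cases
        case 1 then show ?thesis using t that d[of "Suc k" t] k1 3 by (auto simp: avg_def)
      next
        case 2 then show ?thesis using t that d[of "Suc k" t] k1 3 by (auto simp: avg_def)
      next
        case 4: 3 then show ?thesis using that d[of s t] 3 by (auto simp: avg_def)
      qed
    qed
  qed
  ultimately show ?thesis by (auto simp: decr_def)
qed

lemma AvgSeq_decr: "decr c \<Longrightarrow> decr (AvgSeq z a k c)"
  by (induction k arbitrary: c) (auto simp: avg_decr)

lemma AvgSeq_low: "decr c \<Longrightarrow> c k \<le> AvgSeq z a k c k"
proof (cases k)
  case 0 then show ?thesis by simp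
next
  case (Suc j)
  assume dc: "decr c"
  then have "c (Suc j) \<le> c j" by (auto simp: decr_def)
  moreover have "AvgSeq z a (Suc j) c (Suc j) = (if z!j = a then avg j c else c) (Suc j)"
    by (simp add: AvgSeq_high)
  ultimately show ?thesis using Suc by (auto simp: avg_def)
qed

lemma AvgSeq_top:
  assumes "\<forall>t>p. c t = 0" "Suc p \<le> k"
  shows "AvgSeq z a k c = AvgSeq z a (Suc p) c"
  using assms(2)
proof (induction k rule: dec_induct)
  case base then show ?case by simp
next
  case (step k)
  have "avg k c = c" using assms(1) step.hyps by (auto simp: avg_def fun_eq_iff)
  then show ?case using step by simp
qed

lemma Inv_step:
  assumes I: "Inv (length z) p c"
  shows "Inv (length z) (pstep z a p) (AvgSeq z a (length z) c)"
proof -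
  let ?n = "length z"
  have p: "p \<le> ?n" and dc: "decr c" and zc: "\<forall>t>p. c t = 0" and lb: "(1/2)^p \<le> c p"
    using I by (auto simp: Inv_def)
  show ?thesis
  proof (cases "p < ?n")
    case True
    have E: "AvgSeq z a ?n c = AvgSeq z a p (if z!p = a then avg p c else c)"
    proof -
      have "AvgSeq z a ?n c = AvgSeq z a (Suc p) c" by (rule AvgSeq_top[OF zc]) (use True in simp)
      then show ?thesis by (simp only: AvgSeq.simps)
    qed
    show ?thesis
    proof (cases "z!p = a")
      case True2: True
      let ?c' = "avg p c"
      have d': "decr ?c'" using avg_decr[OF dc] .
      have v: "?c' (Suc p) = c p / 2" using zc by (simp add: avg_def)
      have hi: "AvgSeq z a p ?c' t = ?c' t" if "t > p" for t by (rule AvgSeq_high[OF that])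
      have "Inv ?n (Suc p) (AvgSeq z a p ?c')"
        unfolding Inv_def
      proof (intro conjI allI impI)
        show "Suc p \<le> ?n" using True by simp
        show "decr (AvgSeq z a p ?c')" using AvgSeq_decr[OF d'] .
        fix t assume "Suc p < t"
        then show "AvgSeq z a p ?c' t = 0" using hi[of t] zc by (simp add: avg_def)
      next
        show "(1/2)^Suc p \<le> AvgSeq z a p ?c' (Suc p)"
          using hi[of "Suc p"] v lb by simp
      qed
      then show ?thesis using E True True2 by (simp add: pstep_def)
    next
      case False2: False
      have "Inv ?n p (AvgSeq z a p c)"
        unfolding Inv_def
      proof (intro conjI allI impI)
        show "decr (AvgSeq z a p c)" using AvgSeq_decr[OF dc] .
        fix t assume "p < t" then show "AvgSeq z a p c t = 0" using zc by (simp add: AvgSeq_high)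
      next
        show "(1/2)^p \<le> AvgSeq z a p c p" using AvgSeq_low[OF dc, of p z a] lb by linarith
      qed (use p in simp)
      then show ?thesis using E False2 by (simp add: pstep_def)
    qed
  next
    case False
    then have pn: "p = ?n" using p by simp
    have "Inv ?n p (AvgSeq z a ?n c)"
      unfolding Inv_def
    proof (intro conjI allI impI)
      show "decr (AvgSeq z a ?n c)" using AvgSeq_decr[OF dc] .
      fix t assume "p < t" then show "AvgSeq z a ?n c t = 0" using zc pn by (simp add: AvgSeq_high)
    next
      show "(1/2)^p \<le> AvgSeq z a ?n c p" using AvgSeq_low[OF dc, of ?n z a] lb pn by simp
    qed (use p in simp)
    then show ?thesis using pn by (simp add: pstep_def)
  qed
qed

definition cfold :: "'a list \<Rightarrow> 'a list \<Rightarrow> (nat \<Rightarrow> real) \<Rightarrow> (nat \<Rightarrow> real)" where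
  "cfold z x c = fold (\<lambda>a c. AvgSeq z a (length z) c) x c"

lemma Inv_fold: "Inv (length z) p c \<Longrightarrow> Inv (length z) (fold (pstep z) x p) (cfold z x c)"
  unfolding cfold_def
  by (induction x arbitrary: p c) (auto simp: Inv_step)

lemma cfold_zero: "\<forall>t>length z. c t = 0 \<Longrightarrow> t > length z \<Longrightarrow> cfold z x c t = 0"
  unfolding cfold_def
proof (induction x arbitrary: c)
  case Nil then show ?case by simp
next
  case (Cons a x)
  have "\<forall>t>length z. AvgSeq z a (length z) c t = 0" using Cons.prems by (simp add: AvgSeq_high)
  then show ?case using Cons by simp
qed




fun gsub :: "'a list \<Rightarrow> 'a list \<Rightarrow> bool" where
  "gsub [] x = True"
| "gsub (a#zs) [] = False"
| "gsub (a#zs) (b#x) = (if a = b then gsub zs x else gsub (a#zs) x)"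

lemma gsub_weak: "(\<forall>zs b. gsub zs y \<longrightarrow> gsub zs (b#y)) \<and> (\<forall>a zs. gsub (a#zs) y \<longrightarrow> gsub zs y)"
proof (induction y)
  case Nil
  show ?case by (auto elim: gsub.elims)
next
  case (Cons c y)
  have second: "gsub zs (c#y)" if "gsub (a#zs) (c#y)" for a zs
  proof (cases "a = c")
    case True
    then have "gsub zs y" using that by simp
    then show ?thesis using Cons.IH by blast
  next
    case False
    then have "gsub (a#zs) y" using that by simp
    then show ?thesis using Cons.IH by blast
  qed
  have first: "gsub zs (b#c#y)" if "gsub zs (c#y)" for zs b
  proof (cases zs)
    case Nil then show ?thesis by simp
  next
    case (Cons a zs')
    show ?thesis
    proof (cases "a = b")
      case True
      then show ?thesis using second[of a zs'] that Cons by simp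
    next
      case False
      then show ?thesis using that Cons by simp
    qed
  qed
  show ?case using first second by blast
qed

lemma gsub_cons: "gsub zs y \<Longrightarrow> gsub zs (b#y)"
proof -
  assume h: "gsub zs y"
  have "\<forall>zs b. gsub zs y \<longrightarrow> gsub zs (b#y)" by (rule conjunct1[OF gsub_weak])
  from this[rule_format, OF h] show ?thesis .
qed

lemma gsub_append: "gsub zs v \<Longrightarrow> gsub zs (u @ v)"
  by (induction u) (simp_all add: gsub_cons)

lemma gsub_drop1: "gsub (a#zs) y \<Longrightarrow> gsub zs y"
proof -
  assume h: "gsub (a#zs) y"
  have "\<forall>a zs. gsub (a#zs) y \<longrightarrow> gsub zs y" by (rule conjunct2[OF gsub_weak])
  from this[rule_format, OF h] show ?thesis .
qed

lemma sub_to_gsub: "x \<in> subword_lang Sig z \<Longrightarrow> gsub z x"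
proof (induction z arbitrary: x)
  case Nil then show ?case by simp
next
  case (Cons a zs)
  then obtain u v where x: "x = u @ [a] @ v" and v: "v \<in> subword_lang Sig zs" by auto
  have gv: "gsub zs v" using Cons.IH[OF v] .
  have "gsub (a#zs) (u @ a # v)"
  proof (induction u)
    case Nil then show ?case using gv by simp
  next
    case (Cons b u)
    show ?case
    proof (cases "a = b")
      case True
      then show ?thesis using gsub_drop1[OF Cons.IH] by simp
    next
      case False
      then show ?thesis using Cons.IH by simp
    qed
  qed
  then show ?case using x by simp
qed

lemma gsub_to_sub: "gsub z x \<Longrightarrow> set z \<subseteq> Sig \<Longrightarrow> x \<in> lists Sig \<Longrightarrow> x \<in> subword_lang Sig z"
proof (induction z x rule: gsub.induct)
  case (1 x) then show ?case by simp
next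
  case (2 a zs) then show ?case by simp
next
  case (3 a zs b x)
  show ?case
  proof (cases "a = b")
    case True
    then have "x \<in> subword_lang Sig zs" using 3 by simp
    then have "b # x = [] @ [a] @ x \<and> [] \<in> lists Sig" using True by simp
    then show ?thesis using \<open>x \<in> subword_lang Sig zs\<close> by (simp only: subword_lang.simps) blast
  next
    case False
    then have "x \<in> subword_lang Sig (a#zs)" using 3 by simp
    then obtain u v where "x = u @ [a] @ v" "u \<in> lists Sig" "v \<in> subword_lang Sig zs" by auto
    moreover have "b \<in> Sig" using "3.prems" by simp
    ultimately have "b # x = (b#u) @ [a] @ v \<and> b#u \<in> lists Sig \<and> v \<in> subword_lang Sig zs" by simp
    then show ?thesis by (simp only: subword_lang.simps) blast
  qed
qed

lemma pstep_fold: "p \<le> length z \<Longrightarrow> (fold (pstep z) x p = length z) = gsub (drop p z) x"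
proof (induction x arbitrary: p)
  case Nil
  have "gsub (drop p z) [] = (drop p z = [])" by (cases "drop p z") simp_all
  then show ?case using Nil by auto
next
  case (Cons b x)
  have f: "fold (pstep z) (b#x) p = fold (pstep z) x (pstep z b p)" by simp
  show ?case
  proof (cases "p < length z")
    case True
    then have dz: "drop p z = z!p # drop (Suc p) z" by (simp add: Cons_nth_drop_Suc)
    show ?thesis
    proof (cases "z!p = b")
      case True
      have ps: "pstep z b p = Suc p" using True \<open>p < length z\<close> by (simp add: pstep_def)
      have g: "gsub (drop p z) (b#x) = gsub (drop (Suc p) z) x" unfolding dz using True by simp
      show ?thesis unfolding f ps g using Cons.IH[of "Suc p"] \<open>p < length z\<close> by simp
    next
      case False
      have ps: "pstep z b p = p" using False by (simp add: pstep_def)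
      have g: "gsub (drop p z) (b#x) = gsub (drop p z) x" unfolding dz using False by simp
      show ?thesis unfolding f ps g using Cons.IH[of p] Cons.prems by simp
    qed
  next
    case False
    then have pn: "p = length z" using Cons.prems by simp
    have ps: "pstep z b p = p" using pn by (simp add: pstep_def)
    have g: "drop p z = []" using pn by simp
    show ?thesis unfolding f ps g using Cons.IH[of p] Cons.prems g by simp
  qed
qed




lemma proj_non_Mz: "proj_non (Mz z) f = (\<lambda>i. if i \<le> length z then f i else 0)"
  unfolding proj_non_def Mz_def by (auto simp: fun_eq_iff qd_def)

lemma sqnorm_acc_Mz: "sqnorm_on (Mz z) (qacc (Mz z)) f = (cmod (f (2*length z+1)))^2"
proof -
  have "qacc (Mz z) \<inter> {..<qdim (Mz z)} = {2*length z+1}" by (auto simp: Mz_def qd_def)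
  then show ?thesis unfolding sqnorm_on_def by simp
qed

definition cv :: "(nat \<Rightarrow> real) \<Rightarrow> nat \<Rightarrow> complex" where
  "cv c = (\<lambda>t. of_real (c t))"

lemma apply_some:
  assumes "\<forall>t>length z. c t = 0" "i < qd (length z)"
  shows "apply_op (Mz z) (Some a) (cv c) i = OpSeq z a (length z) (cv c) i"
  using assms by (simp add: apply_op_Mz Opz_def)

lemma apply_some_acc:
  assumes "\<forall>t>length z. c t = 0"
  shows "apply_op (Mz z) (Some a) (cv c) (2*length z+1) = 0"
proof -
  have "apply_op (Mz z) (Some a) (cv c) (2*length z+1) = OpSeq z a (length z) (cv c) (2*length z+1)"
    by (simp add: apply_op_Mz Opz_def qd_def)
  also have "\<dots> = cv c (2*length z+1)" by (rule OpSeq_acc) simp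
  also have "\<dots> = 0" using assms by (simp add: cv_def)
  finally show ?thesis .
qed

lemma step_some:
  assumes z: "\<forall>t>length z. c t = 0"
  shows "\<exists>r. step (Mz z) (Some a) (cv c, pa, pr) = (cv (AvgSeq z a (length z) c), pa, r)"
proof -
  let ?n = "length z"
  let ?f = "apply_op (Mz z) (Some a) (cv c)"
  have P: "proj_non (Mz z) ?f = cv (AvgSeq z a ?n c)"
  proof
    fix i
    show "proj_non (Mz z) ?f i = cv (AvgSeq z a ?n c) i"
    proof (cases "i \<le> ?n")
      case True
      have "?f i = OpSeq z a ?n (cv c) i" using apply_some[OF z] True by (simp add: qd_def)
      also have "\<dots> = AvgSeq z a ?n (cv c) i"
        by (rule OpSeq_nh) (use z True in \<open>auto simp: cv_def\<close>)
      also have "\<dots> = cv (AvgSeq z a ?n c) i"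
        unfolding cv_def AvgSeq_of_real by simp
      finally show ?thesis using True by (simp add: proj_non_Mz)
    next
      case False
      then show ?thesis using z by (simp add: proj_non_Mz cv_def AvgSeq_high)
    qed
  qed
  have S: "sqnorm_on (Mz z) (qacc (Mz z)) ?f = 0"
    using apply_some_acc[OF z] by (simp add: sqnorm_acc_Mz)
  show ?thesis unfolding step_def Let_def using P S by simp
qed

lemma fold_some:
  "\<forall>t>length z. c t = 0 \<Longrightarrow> \<exists>r. fold (step (Mz z)) (map Some x) (cv c, pa, pr) = (cv (cfold z x c), pa, r)"
proof (induction x arbitrary: c pr)
  case Nil then show ?case by (simp add: cfold_def)
next
  case (Cons a x)
  obtain r where r: "step (Mz z) (Some a) (cv c, pa, pr) = (cv (AvgSeq z a (length z) c), pa, r)"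
    using step_some[OF Cons.prems] by blast
  have z': "\<forall>t>length z. AvgSeq z a (length z) c t = 0" using Cons.prems by (simp add: AvgSeq_high)
  obtain r' where "fold (step (Mz z)) (map Some x) (cv (AvgSeq z a (length z) c), pa, r)
       = (cv (cfold z x (AvgSeq z a (length z) c)), pa, r')"
    using Cons.IH[OF z'] by blast
  then show ?case using r by (simp add: cfold_def)
qed

lemma wend_inner:
  "(\<Sum>t<qd n. of_real (wend n t) * cv c t) = of_real (c n / sqrt 2 - c (2*n+1) / sqrt 2)"
proof -
  have "(\<Sum>t<qd n. of_real (wend n t) * cv c t) = (\<Sum>t\<in>{n, 2*n+1}. of_real (wend n t) * cv c t)"
    by (rule sum_support) (auto simp: wend_def qd_def)
  also have "\<dots> = of_real (c n / sqrt 2 - c (2*n+1) / sqrt 2)"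
    by (simp add: wend_def cv_def of_real_divide field_simps)
  finally show ?thesis .
qed

lemma step_none:
  assumes z: "\<forall>t>length z. c t = 0"
  shows "fst (snd (step (Mz z) None (cv c, pa, pr))) = pa + (c (length z))^2"
proof -
  let ?n = "length z"
  have c0: "c (2*?n+1) = 0" using z by simp
  have "apply_op (Mz z) None (cv c) (2*?n+1) = hrefl (qd ?n) (wend ?n) (cv c) (2*?n+1)"
    by (simp add: apply_op_Mz Opz_def qd_def)
  also have "\<dots> = of_real (c ?n)"
    unfolding hrefl_def wend_inner using c0
    by (simp add: cv_def wend_def of_real_divide field_simps flip: of_real_mult)
  finally have "apply_op (Mz z) None (cv c) (2*?n+1) = of_real (c ?n)" .
  then show ?thesis unfolding step_def Let_def by (simp add: sqnorm_acc_Mz)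
qed

definition e0 :: "nat \<Rightarrow> real" where "e0 = (\<lambda>t. if t = 0 then 1 else 0)"

lemma init_Mz: "init_state (Mz z) = (cv e0, 0, 0)"
  by (simp add: init_state_def Mz_def cv_def e0_def fun_eq_iff)

lemma e0_zero: "\<forall>t>length z. e0 t = 0" by (simp add: e0_def)

lemma run_Mz: "\<exists>r. run (Mz z) (map Some x) = (cv (cfold z x e0), 0, r)"
  unfolding run_def init_Mz using fold_some[OF e0_zero] by blast

lemma cfold_e0_zero: "t > length z \<Longrightarrow> cfold z x e0 t = 0"
  using cfold_zero[OF e0_zero] by blast

lemma acc_prob_Mz: "acc_prob (Mz z) x = (cfold z x e0 (length z))^2"
proof -
  obtain r where r: "run (Mz z) (map Some x) = (cv (cfold z x e0), 0, r)" using run_Mz by blast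
  have "run (Mz z) (map Some x @ [None]) = step (Mz z) None (run (Mz z) (map Some x))"
    by (simp add: run_def)
  moreover have "\<forall>t>length z. cfold z x e0 t = 0" by (simp add: cfold_e0_zero)
  ultimately show ?thesis unfolding acc_prob_def using r step_none[of z "cfold z x e0" 0 r]
    by simp
qed

lemma Inv_e0: "Inv n 0 e0"
  by (auto simp: Inv_def decr_def e0_def)

theorem theorem4p7:
  fixes Sig :: "'a set" and z :: "'a list"
  assumes "finite Sig" and "set z \<subseteq> Sig"
  shows "\<exists>M :: 'a mmqfa. is_mmqfa Sig M \<and> end_decisive Sig M \<and>
           accepts_bounded_pos_one_sided Sig M (subword_lang Sig z)"
proof (rule exI[of _ "Mz z"], intro conjI)
  let ?n = "length z"
  show "is_mmqfa Sig (Mz z)" by (rule Mz_is)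
  show "end_decisive Sig (Mz z)"
    unfolding end_decisive_def
  proof (intro ballI allI impI)
    fix x k i assume "x \<in> lists Sig" "k < length x" "i \<in> qacc (Mz z)"
    then have i: "i = 2*?n+1" by (simp add: Mz_def)
    obtain r where r: "run (Mz z) (map Some (take k x)) = (cv (cfold z (take k x) e0), 0, r)"
      using run_Mz by blast
    have "\<forall>t>length z. cfold z (take k x) e0 t = 0" using cfold_e0_zero by blast
    then show "apply_op (Mz z) (Some (x ! k)) (fst (run (Mz z) (map Some (take k x)))) i = 0"
      using r i apply_some_acc by simp
  qed
  show "accepts_bounded_pos_one_sided Sig (Mz z) (subword_lang Sig z)"
    unfolding accepts_bounded_pos_one_sided_def
  proof (rule exI[of _ "(1/4)^?n / 2"], rule conjI)
    show "(0::real) < (1/4)^?n / 2" by simp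
  next
    show "\<forall>x\<in>lists Sig. (x \<in> subword_lang Sig z \<longrightarrow> (1/4)^?n / 2 < acc_prob (Mz z) x) \<and>
          (x \<notin> subword_lang Sig z \<longrightarrow> acc_prob (Mz z) x = 0)"
    proof
    fix x assume x: "x \<in> lists Sig"
    define p where "p = fold (pstep z) x 0"
    define C where "C = cfold z x e0"
    have I: "Inv ?n p C" unfolding p_def C_def using Inv_fold[OF Inv_e0] .
    have A: "acc_prob (Mz z) x = (C ?n)^2" unfolding C_def by (rule acc_prob_Mz)
    have pe: "(p = ?n) = gsub z x" using pstep_fold[of 0 z x] unfolding p_def by simp
    show "(x \<in> subword_lang Sig z \<longrightarrow> (1/4)^?n / 2 < acc_prob (Mz z) x) \<and>
          (x \<notin> subword_lang Sig z \<longrightarrow> acc_prob (Mz z) x = 0)"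
    proof (intro conjI impI)
      assume "x \<in> subword_lang Sig z"
      then have "p = ?n" using pe sub_to_gsub by blast
      then have lb: "(1/2)^?n \<le> C ?n" using I by (simp add: Inv_def)
      have "((1/2)^?n)^2 \<le> (C ?n)^2" by (rule power_mono[OF lb]) simp
      moreover have "((1/2::real)^?n)^2 = (1/4)^?n"
        by (simp add: power_mult_distrib[symmetric] power2_eq_square)
      moreover have "(1/4::real)^?n / 2 < (1/4)^?n" by simp
      ultimately show "(1/4)^?n / 2 < acc_prob (Mz z) x" using A by linarith
    next
      assume "x \<notin> subword_lang Sig z"
      then have "\<not> gsub z x" using gsub_to_sub assms(2) x by blast
      then have "p < ?n" using pe I by (simp add: Inv_def)
      then have "C ?n = 0" using I by (simp add: Inv_def)
      then show "acc_prob (Mz z) x = 0" using A by simp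
    qed
    qed
  qed
qed


end
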